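(* Let $n\geq 2$. For $x\in[0,1]$ let $X^{(x)}_n$ be a random variable taking values in $\{0,1,\ldots,n\}$ with $$P\left(X^{(x)}_n=k\right)=\binom{n}{k}\frac{x^{(k,c(x))}\,(1-x)^{(n-k,c(x))}}{1^{(n,c(x))}},\qquad c(x)=-\frac{\min\{x,1-x\}}{n-1},\quad k\in\{0,\ldots,n\}.$$ Then for all $0\leq x\leq y\leq 1$ we have $X^{(x)}_n\leq_{\mathrm{st}} X^{(y)}_n$.
   Context: For real $z$ and $h$, the rising factorial with increment $h$ is $z^{(0,h)}=1$ and $z^{(m,h)}=z(z+h)\cdots(z+(m-1)h)$ for integers $m\geq 1$. $X^{(x)}_n$ is the number of white balls drawn in $n$ draws from a Pólya urn initially containing $x$ white and $1-x$ black balls with replacement parameter $c(x)$. For random variables $X,Y$, $X\leq_{\mathrm{st}}Y$ (usual stochastic order) means that their distribution functions satisfy $F_X(t)\geq F_Y(t)$ for all $t\in\mathbb{R}$. *)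

theory Defs
  imports Complex_Main
begin

definition rising_fact_h :: "real \<Rightarrow> nat \<Rightarrow> real \<Rightarrow> real" where
  "rising_fact_h z m h = (\<Prod>j<m. z + real j * h)"

definition polya_c :: "nat \<Rightarrow> real \<Rightarrow> real" where
  "polya_c n x = - min x (1 - x) / (real n - 1)"

definition polya_prob :: "nat \<Rightarrow> real \<Rightarrow> nat \<Rightarrow> real" where
  "polya_prob n x k =
     (if k \<le> n then
        real (n choose k) * rising_fact_h x k (polya_c n x)
          * rising_fact_h (1 - x) (n - k) (polya_c n x)
          / rising_fact_h 1 n (polya_c n x)
      else 0)"

definition polya_cdf :: "nat \<Rightarrow> real \<Rightarrow> real \<Rightarrow> real" where
  "polya_cdf n x t = (\<Sum>k\<in>{k. k \<le> n \<and> real k \<le> t}. polya_prob n x k)"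

text \<open>Usual stochastic order between distributions given by distribution functions:
  X \<le>st Y iff F_X(t) \<ge> F_Y(t) for all real t.\<close>
definition st_le :: "(real \<Rightarrow> real) \<Rightarrow> (real \<Rightarrow> real) \<Rightarrow> bool" where
  "st_le F G \<longleftrightarrow> (\<forall>t. F t \<ge> G t)"

end

theory Submission imports Defs begin

lemma rf_Suc: "rising_fact_h a (Suc k) c = a * rising_fact_h (a + c) k c"
  unfolding rising_fact_h_def by (subst prod.lessThan_Suc_shift) (simp add: algebra_simps)

lemma vander:
  "(\<Sum>k\<le>n. real (n choose k) * rising_fact_h a k c * rising_fact_h b (n - k) c)
     = rising_fact_h (a + b) n c"
proof (induction n arbitrary: a b)
  case 0
  then show ?case by (simp add: rising_fact_h_def)
next
  case (Suc n)
  define f where "f k = real (Suc n choose k) * rising_fact_h a k c * rising_fact_h b (Suc n - k) c" for k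
  have e1: "(\<Sum>k\<le>Suc n. f k) = f 0 + (\<Sum>k\<le>n. f (Suc k))"
    by (rule sum.atMost_Suc_shift)
  have e2: "(\<Sum>k\<le>n. f (Suc k)) = (\<Sum>k\<le>n. real (n choose k) * rising_fact_h a (Suc k) c * rising_fact_h b (n - k) c)
      + (\<Sum>k\<le>n. real (n choose Suc k) * rising_fact_h a (Suc k) c * rising_fact_h b (n - k) c)"
    unfolding f_def by (simp add: sum.distrib algebra_simps)
  have e3: "(\<Sum>k\<le>n. real (n choose k) * rising_fact_h a (Suc k) c * rising_fact_h b (n - k) c)
     = a * rising_fact_h (a + c + b) n c"
    using Suc.IH[of "a + c" b] by (simp add: rf_Suc sum_distrib_left[symmetric] algebra_simps)
  have "f 0 + (\<Sum>k\<le>n. real (n choose Suc k) * rising_fact_h a (Suc k) c * rising_fact_h b (n - k) c)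
     = (\<Sum>k\<le>Suc n. real (n choose k) * rising_fact_h a k c * rising_fact_h b (Suc n - k) c)"
    by (subst sum.atMost_Suc_shift) (simp add: f_def)
  also have "\<dots> = (\<Sum>k\<le>n. real (n choose k) * rising_fact_h a k c * rising_fact_h b (Suc n - k) c)"
    by simp
  also have "\<dots> = (\<Sum>k\<le>n. b * (real (n choose k) * rising_fact_h a k c * rising_fact_h (b + c) (n - k) c))"
    by (rule sum.cong) (auto simp: Suc_diff_le rf_Suc)
  also have "\<dots> = b * rising_fact_h (a + (b + c)) n c"
    using Suc.IH[of a "b + c"] by (simp only: sum_distrib_left[symmetric])
  finally have e4: "f 0 + (\<Sum>k\<le>n. real (n choose Suc k) * rising_fact_h a (Suc k) c * rising_fact_h b (n - k) c)
     = b * rising_fact_h (a + (b + c)) n c" .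
  have "(\<Sum>k\<le>Suc n. f k) = (a + b) * rising_fact_h (a + b + c) n c"
    using e1 e2 e3 e4 by (simp add: algebra_simps)
  then show ?case
    by (simp add: f_def rf_Suc algebra_simps)
qed

lemma cdf_order:
  fixes p q :: "nat \<Rightarrow> real"
  assumes tp: "\<And>i j. i \<le> j \<Longrightarrow> j \<le> n \<Longrightarrow> p j * q i \<le> p i * q j"
    and sp: "sum p {..n} = 1" and sq: "sum q {..n} = 1"
    and S: "S \<subseteq> {..n}" and sep: "\<And>i j. i \<in> S \<Longrightarrow> j \<in> {..n} - S \<Longrightarrow> i \<le> j"
  shows "sum q S \<le> sum p S"
proof -
  let ?T = "{..n} - S"
  have fS: "finite S" using S finite_subset by blast
  have "sum p ?T * sum q S = (\<Sum>j\<in>?T. \<Sum>i\<in>S. p j * q i)"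
    by (simp add: sum_product)
  also have "\<dots> \<le> (\<Sum>j\<in>?T. \<Sum>i\<in>S. p i * q j)"
    by (intro sum_mono) (use tp sep in auto)
  also have "\<dots> = sum p S * sum q ?T"
    by (simp add: sum_product sum.swap[of _ S] mult.commute)
  finally have *: "sum p ?T * sum q S \<le> sum p S * sum q ?T" .
  have "sum p ?T = 1 - sum p S" "sum q ?T = 1 - sum q S"
    using sum_diff[of "{..n}" S p] sum_diff[of "{..n}" S q] S sp sq by auto
  with * show ?thesis by (simp add: algebra_simps)
qed


lemma D_pos:
  assumes n: "n \<ge> 2" and "0 \<le> x" "x \<le> 1"
  shows "rising_fact_h 1 n (polya_c n x) > 0"
  unfolding rising_fact_h_def
proof (rule prod_pos)
  fix j assume "j \<in> {..<n}"
  hence j: "real j \<le> real n - 1" by auto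
  have e: "real n - 1 > 0" using n by auto
  define m where "m = min x (1 - x)"
  have m: "0 \<le> m" "m \<le> 1/2" using assms unfolding m_def by (auto simp: min_def)
  have "real j * (m / (real n - 1)) \<le> (real n - 1) * (m / (real n - 1))"
    using j m e by (intro mult_right_mono) auto
  also have "\<dots> = m" using e by simp
  finally have "real j * (m / (real n - 1)) \<le> m" .
  then show "0 < 1 + real j * polya_c n x"
    using m unfolding polya_c_def m_def[symmetric] by simp
qed

lemma sum_one:
  assumes n: "n \<ge> 2" and "0 \<le> x" "x \<le> 1"
  shows "sum (polya_prob n x) {..n} = 1"
proof -
  have "sum (polya_prob n x) {..n} = (\<Sum>k\<le>n. real (n choose k) * rising_fact_h x k (polya_c n x)
          * rising_fact_h (1 - x) (n - k) (polya_c n x)) / rising_fact_h 1 n (polya_c n x)"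
    by (simp add: polya_prob_def sum_divide_distrib)
  also have "\<dots> = 1" using vander[of n x "polya_c n x" "1 - x"] D_pos[OF assms] by simp
  finally show ?thesis .
qed

lemma symm:
  assumes "k \<le> n"
  shows "polya_prob n x k = polya_prob n (1 - x) (n - k)"
proof -
  have c: "polya_c n (1 - x) = polya_c n x" unfolding polya_c_def by (simp add: min.commute)
  show ?thesis using assms unfolding polya_prob_def c
    by (simp add: binomial_symmetric[OF assms, symmetric] mult_ac)
qed

lemma form:
  assumes n: "n \<ge> 2" and x: "0 \<le> x" "x \<le> 1/2" and k: "k \<le> n"
  shows "polya_prob n x k = real (n choose k) * x ^ k * (\<Prod>j<k. 1 - real j / (real n - 1))
     * (\<Prod>j<n-k. 1 - x - real j * x / (real n - 1)) / (\<Prod>j<n. 1 - real j * x / (real n - 1))"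
proof -
  have c: "polya_c n x = - x / (real n - 1)" using x unfolding polya_c_def by simp
  have r1: "rising_fact_h x k (polya_c n x) = x ^ k * (\<Prod>j<k. 1 - real j / (real n - 1))"
  proof -
    have "(\<Prod>j<k. x + real j * (- x / (real n - 1))) = (\<Prod>j<k. x * (1 - real j / (real n - 1)))"
      by (rule prod.cong) (auto simp: algebra_simps)
    also have "\<dots> = x ^ k * (\<Prod>j<k. 1 - real j / (real n - 1))"
      by (simp add: prod.distrib)
    finally show ?thesis unfolding rising_fact_h_def c .
  qed
  have r2: "rising_fact_h (1 - x) (n - k) (polya_c n x) = (\<Prod>j<n-k. 1 - x - real j * x / (real n - 1))"
    unfolding rising_fact_h_def c by (rule prod.cong) (auto simp: algebra_simps)
  have r3: "rising_fact_h 1 n (polya_c n x) = (\<Prod>j<n. 1 - real j * x / (real n - 1))"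
    unfolding rising_fact_h_def c by (rule prod.cong) (auto simp: algebra_simps)
  show ?thesis unfolding polya_prob_def using k
    by (simp only: r1 r2 r3 if_True mult.assoc)
qed


lemma prod_split_add: "(\<Prod>j<m+d. g j) = (\<Prod>j<m. g j) * (\<Prod>l<d. g (m+l)) " for g :: "nat \<Rightarrow> real"
  by (induction d) (simp_all add: mult.assoc)

lemma tp_low:
  assumes n: "n \<ge> 2" and x: "0 \<le> x" "x \<le> y" "y \<le> 1/2" and ij: "i \<le> j" "j \<le> n"
  shows "polya_prob n x j * polya_prob n y i \<le> polya_prob n x i * polya_prob n y j"
proof -
  define e where "e = real n - 1"
  have e: "e > 0" using n unfolding e_def by auto
  define A where "A k = (\<Prod>j<k. 1 - real j / e)" for k
  define g where "g z l = 1 - z - real l * z / e" for z l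
  define B where "B z l = (\<Prod>j<l. g z j)" for z l
  define D where "D z = (\<Prod>j<n. 1 - real j * z / e)" for z
  have P: "polya_prob n z k = real (n choose k) * z ^ k * A k * B z (n - k) / D z"
    if "0 \<le> z" "z \<le> 1/2" "k \<le> n" for z k
    using form[OF n that] unfolding A_def B_def D_def g_def e_def by simp
  have gnn: "0 \<le> g z l" if "0 \<le> z" "z \<le> 1/2" "l < n" for z l
  proof -
    have "real l \<le> e" using that unfolding e_def by auto
    hence "real l * z \<le> e * z" using that by (intro mult_right_mono) auto
    hence "real l * z / e \<le> z" using e by (simp add: divide_simps mult.commute)
    thus ?thesis unfolding g_def using that by simp
  qed
  have gmono: "g y l \<le> g x l" for l
  proof -
    have "real l * x \<le> real l * y" using x by (intro mult_left_mono) auto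
    hence "real l * x / e \<le> real l * y / e" using e by (simp add: divide_right_mono)
    thus ?thesis unfolding g_def using x by simp
  qed
  have Ann: "0 \<le> A k" if "k \<le> n" for k
    unfolding A_def
  proof (rule prod_nonneg)
    fix l assume "l \<in> {..<k}"
    hence "real l \<le> e" using that unfolding e_def by auto
    thus "0 \<le> 1 - real l / e" using e by (simp add: divide_simps)
  qed
  have Bnn: "0 \<le> B z l" if "0 \<le> z" "z \<le> 1/2" "l \<le> n" for z l
    unfolding B_def by (rule prod_nonneg) (use gnn that in auto)
  have Dpos: "0 < D z" if "0 \<le> z" "z \<le> 1/2" for z
    using D_pos[OF n, of z] that unfolding rising_fact_h_def D_def polya_c_def e_def
    by (simp add: algebra_simps)
  obtain d where d: "j = i + d" using ij by (metis le_Suc_ex)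
  define m where "m = n - j"
  have nm: "n - i = m + d" using ij d unfolding m_def by simp
  define Q where "Q z = (\<Prod>l<d. g z (m + l))" for z
  have BS: "B z (n - i) = B z m * Q z" for z
    unfolding nm B_def Q_def by (rule prod_split_add)
  have Qnn: "0 \<le> Q y" unfolding Q_def
    by (rule prod_nonneg) (use gnn x ij d nm in auto)
  have Qmono: "Q y \<le> Q x" unfolding Q_def
    by (rule prod_mono) (use gnn x gmono ij d nm in auto)
  have pw: "x ^ d \<le> y ^ d" using x by (intro power_mono) auto
  have core0: "x ^ d * Q y \<le> y ^ d * Q x"
    using pw Qmono Qnn x by (intro mult_mono) auto
  have cnn: "0 \<le> x ^ i * y ^ i * B x m * B y m"
    using Bnn x m_def by auto
  have core: "(x ^ i * y ^ i * B x m * B y m) * (x ^ d * Q y) \<le> (x ^ i * y ^ i * B x m * B y m) * (y ^ d * Q x)"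
    by (rule mult_left_mono[OF core0 cnn])
  define K where "K = real (n choose i) * real (n choose j) * A i * A j / (D x * D y)"
  have Knn: "0 \<le> K" unfolding K_def
    using Ann[of i] Ann[of j] Dpos[of x] Dpos[of y] x ij by (intro divide_nonneg_pos mult_nonneg_nonneg mult_pos_pos) auto
  have x2: "x \<le> 1/2" using x by simp
  have y0: "0 \<le> y" using x by simp
  note Pxj = P[OF x(1) x2 ij(2)] and Pyi = P[OF y0 x(3), of i] and Pxi = P[OF x(1) x2, of i]
    and Pyj = P[OF y0 x(3) ij(2)]
  have "polya_prob n x j * polya_prob n y i = K * ((x ^ i * y ^ i * B x m * B y m) * (x ^ d * Q y))"
    using ij unfolding Pxj Pyi[OF ij(1)[THEN order_trans, OF ij(2)]] K_def BS unfolding m_def d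
    by (simp add: power_add field_simps)
  also have "\<dots> \<le> K * ((x ^ i * y ^ i * B x m * B y m) * (y ^ d * Q x))"
    by (rule mult_left_mono[OF core Knn])
  also have "\<dots> = polya_prob n x i * polya_prob n y j"
    using ij unfolding Pyj Pxi[OF ij(1)[THEN order_trans, OF ij(2)]] K_def BS unfolding m_def d
    by (simp add: power_add field_simps)
  finally show ?thesis .
qed


lemma tp_high:
  assumes n: "n \<ge> 2" and x: "1/2 \<le> x" "x \<le> y" "y \<le> 1" and ij: "i \<le> j" "j \<le> n"
  shows "polya_prob n x j * polya_prob n y i \<le> polya_prob n x i * polya_prob n y j"
proof -
  have i: "i \<le> n" using ij by simp
  have "polya_prob n (1 - y) (n - i) * polya_prob n (1 - x) (n - j)
      \<le> polya_prob n (1 - y) (n - j) * polya_prob n (1 - x) (n - i)"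
    using x ij by (intro tp_low[OF n]) auto
  thus ?thesis using symm[OF i, of x] symm[OF i, of y] symm[OF ij(2), of x] symm[OF ij(2), of y]
    by (simp add: mult.commute)
qed

lemma cdf_mono:
  assumes n: "n \<ge> 2" and x: "0 \<le> x" "x \<le> y" "y \<le> 1"
    and tp: "\<And>i j. i \<le> j \<Longrightarrow> j \<le> n \<Longrightarrow> polya_prob n x j * polya_prob n y i \<le> polya_prob n x i * polya_prob n y j"
  shows "polya_cdf n y t \<le> polya_cdf n x t"
  unfolding polya_cdf_def
proof (rule cdf_order[where n = n])
  show "sum (polya_prob n x) {..n} = 1" using sum_one[OF n] x by simp
  show "sum (polya_prob n y) {..n} = 1" using sum_one[OF n] x by simp
  show "{k. k \<le> n \<and> real k \<le> t} \<subseteq> {..n}" by auto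
  fix i j assume "i \<in> {k. k \<le> n \<and> real k \<le> t}" "j \<in> {..n} - {k. k \<le> n \<and> real k \<le> t}"
  thus "i \<le> j" by auto
qed (rule tp)

theorem theorem3p2:
  fixes n :: nat and x y :: real
  assumes "n \<ge> 2" and "0 \<le> x" and "x \<le> y" and "y \<le> 1"
  shows "st_le (polya_cdf n x) (polya_cdf n y)"
  unfolding st_le_def
proof
  fix t
  have low: "polya_cdf n b t \<le> polya_cdf n a t" if "0 \<le> a" "a \<le> b" "b \<le> 1/2" for a b
    using that assms(1) by (intro cdf_mono tp_low) auto
  have high: "polya_cdf n b t \<le> polya_cdf n a t" if "1/2 \<le> a" "a \<le> b" "b \<le> 1" for a b
    using that assms(1) by (intro cdf_mono tp_high) auto
  show "polya_cdf n y t \<le> polya_cdf n x t"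
  proof (cases "y \<le> 1/2")
    case True thus ?thesis using low assms by auto
  next
    case False
    show ?thesis
    proof (cases "1/2 \<le> x")
      case True thus ?thesis using high assms by auto
    next
      case False
      have "polya_cdf n y t \<le> polya_cdf n (1/2) t" using high \<open>\<not> y \<le> 1/2\<close> assms by auto
      also have "\<dots> \<le> polya_cdf n x t" using low False assms by auto
      finally show ?thesis .
    qed
  qed
qed

end
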